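(* For every integer $n\ge 0$, $$\sum_{k=0}^n(-1)^k\binom nk C_k\binom{2n-2k}{n-k}=\binom{n}{\lfloor n/2\rfloor}^2 .$$
   Context: $C_k=\binom{2k}{k}\frac{1}{k+1}$ denotes the $k$-th Catalan number. *)

theory Defs
  imports Main
begin

text \<open>k-th Catalan number C_k = binom(2k,k)/(k+1) (an integer; nat division is exact).\<close>
definition catalan :: "nat \<Rightarrow> nat" where
  "catalan k = ((2*k) choose k) div (k+1)"

end

theory Submission imports Defs Complex_Main begin

definition aa :: "nat \<Rightarrow> nat \<Rightarrow> real" where
  "aa n k = (-1)^k * real (n choose k) * real ((2*k) choose k) * real ((2*n - 2*k) choose (n - k))"

lemma aa_zero: "n < k \<Longrightarrow> aa n k = 0"
  by (simp add: aa_def)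

lemma aa_fact: "k \<le> n \<Longrightarrow> aa n k = (-1)^k * fact n * fact (2*k) * fact (2*(n-k)) / (fact k ^ 3 * fact (n-k) ^ 3)"
proof -
  assume kn: "k \<le> n"
  have 1: "real (n choose k) = fact n / (fact k * fact (n-k))" using binomial_fact[OF kn] by simp
  have 2: "real ((2*k) choose k) = fact (2*k) / (fact k * fact k)" using binomial_fact[of k "2*k"] by simp
  have e: "2*n - 2*k = 2*(n-k)" by simp
  have 3: "real ((2*n-2*k) choose (n-k)) = fact (2*(n-k)) / (fact (n-k) * fact (n-k))"
    unfolding e using binomial_fact[of "n-k" "2*(n-k)"] by (simp add: mult_2)
  show ?thesis unfolding aa_def 1 2 3 by (simp add: power3_eq_cube)
qed

lemma f2S: "(fact (2*Suc k) :: real) = (2*real k+2)*(2*real k+1)*fact (2*k)"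
proof -
  have "2*Suc k = Suc (Suc (2*k))" by simp
  then show ?thesis by (simp only: fact_Suc) (simp add: algebra_simps)
qed

lemma algz: fixes u w z D :: real assumes "z \<noteq> 0" "D \<noteq> 0"
  shows "u * (2*z*w) / (z^3 * D) = (2*w/z^2) * (u/D)"
  using assms by (simp add: field_simps power2_eq_square power3_eq_cube)

lemma algA: fixes s M P Q a b x :: real assumes "a \<noteq> 0" "b \<noteq> 0" "x + 1 \<noteq> 0"
  shows "(-s) * M * ((2*x+2)*(2*x+1)*P) * Q / (((x+1)*a)^3 * b^3) = - (2*(2*x+1)/(x+1)^2) * (s*M*P*Q/(a^3*b^3))"
proof -
  have "(-s) * M * ((2*x+2)*(2*x+1)*P) * Q / (((x+1)*a)^3 * b^3) = (-(s*M*P*Q)) * (2*(x+1)*(2*x+1)) / ((x+1)^3 * (a^3*b^3))"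
    unfolding power_mult_distrib by (simp add: mult_ac distrib_left) (simp add: algebra_simps)
  also have "\<dots> = (2*(2*x+1)/(x+1)^2) * ((-(s*M*P*Q))/(a^3*b^3))"
    by (rule algz) (use assms in auto)
  finally show ?thesis by simp
qed

lemma algB: fixes s M P Q a b y :: real assumes "a \<noteq> 0" "b \<noteq> 0" "y + 1 \<noteq> 0"
  shows "s * M * P * ((2*y+2)*(2*y+1)*Q) / (a^3 * ((y+1)*b)^3) = 2*(2*y+1)/(y+1)^2 * (s*M*P*Q/(a^3*b^3))"
proof -
  have "s * M * P * ((2*y+2)*(2*y+1)*Q) / (a^3 * ((y+1)*b)^3) = (s*M*P*Q) * (2*(y+1)*(2*y+1)) / ((y+1)^3 * (a^3*b^3))"
    unfolding power_mult_distrib by (simp add: mult_ac distrib_left)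
  also have "\<dots> = (2*(2*y+1)/(y+1)^2) * ((s*M*P*Q)/(a^3*b^3))"
    by (rule algz) (use assms in auto)
  finally show ?thesis by simp
qed

lemma relY: "k \<le> m \<Longrightarrow> aa m (Suc k) * ((real k+1)^2 * (2*(real m - real k) - 1)) = - ((real m - real k)^2 * (2*real k + 1) * aa m k)"
proof (cases "k < m")
  case False
  assume "k \<le> m" then have "k = m" using False by simp
  then show ?thesis by (simp add: aa_zero)
next
  case True
  then obtain i where m: "m = Suc k + i" using less_iff_Suc_add by auto
  have A: "aa m (Suc k) = (-1)^(Suc k) * fact m * fact (2*(Suc k)) * fact (2*i) / (fact (Suc k) ^ 3 * fact i ^ 3)"
    using aa_fact[of "Suc k" m] m by simp
  have B: "aa m k = (-1)^k * fact m * fact (2*k) * fact (2*(Suc i)) / (fact k ^ 3 * fact (Suc i) ^ 3)"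
  proof -
    have "m - k = Suc i" using m by simp
    then show ?thesis using aa_fact[of k m] m by simp
  qed
  have f3: "fact (Suc k) = (real k+1)*fact k" by (simp add: fact_Suc)
  have f4: "fact (Suc i) = (real i+1)*fact i" by (simp add: fact_Suc)
  have d: "real m - real k = real i + 1" using m by simp
  have p: "(fact k :: real) > 0" "(fact i :: real) > 0" "real k + 1 > 0" "real i + 1 > 0" by auto
  define C where "C = (-1)^k * fact m * fact (2*k) * fact (2*i) / ((fact k)^3 * (fact i)^3 :: real)"
  have A': "aa m (Suc k) = - (2 * (2*real k+1) / (real k+1)^2) * C"
    unfolding A f2S f3 C_def using p algA[of "fact k" "fact i" "real k" "(-1)^k" "fact m" "fact (2*k)" "fact (2*i)"] by simp
  have B': "aa m k = 2 * (2*real i+1) / (real i + 1)^2 * C"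
    unfolding B f2S f4 C_def using p algB[of "fact k" "fact i" "real i" "(-1)^k" "fact m" "fact (2*k)" "fact (2*i)"] by simp
  show ?thesis unfolding A' B' d by (simp add: field_simps)
qed

lemma algZ: fixes s M P Q a b u v n1 n2 w1 w3 :: real
  assumes "a \<noteq> 0" "b \<noteq> 0" "u \<noteq> 0" "v \<noteq> 0"
  shows "s * ((n2*n1)*M) * P * ((2*v)*w3*(2*u)*w1*Q) / (a^3*((v*u)*b)^3) = (n1*n2*4*w1*w3/(u^2*v^2)) * (s*M*P*Q/(a^3*b^3))"
  using assms unfolding power_mult_distrib by (simp add: field_simps power2_eq_square power3_eq_cube)

lemma relZ: "k \<le> n + 2 \<Longrightarrow> aa n k * (4*(real n+1)*(real n+2)*(2*(real n - real k)+1)*(2*(real n - real k)+3)) = (real n - real k + 1)^2 * (real n - real k + 2)^2 * aa (n+2) k"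
proof (cases "k \<le> n")
  case False
  assume "k \<le> n+2"
  then have "k = n+1 \<or> k = n+2" using False by auto
  then show ?thesis using False by (auto simp: aa_zero)
next
  case True
  then obtain i where n: "n = k + i" using le_Suc_ex by blast
  have A: "aa n k = (-1)^k * fact n * fact (2*k) * fact (2*i) / (fact k ^ 3 * fact i ^ 3)"
    using aa_fact[of k n] n by simp
  have B: "aa (n+2) k = (-1)^k * fact (n+2) * fact (2*k) * fact (2*(i+2)) / (fact k ^ 3 * fact (i+2) ^ 3)"
  proof -
    have "n + 2 - k = i + 2" using n by simp
    then show ?thesis using aa_fact[of k "n+2"] n by simp
  qed
  have g1: "(fact (n+2) :: real) = (real n+2)*(real n+1)*fact n"
  proof -
    have "n+2 = Suc (Suc n)" by simp
    then show ?thesis by (simp only: fact_Suc) (simp add: algebra_simps)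
  qed
  have g2: "(fact (2*(i+2)) :: real) = (2*(real i+2))*(2*real i+3)*(2*(real i+1))*(2*real i+1)*fact (2*i)"
  proof -
    have "2*(i+2) = Suc (Suc (Suc (Suc (2*i))))" by simp
    then show ?thesis by (simp only: fact_Suc) (simp add: algebra_simps)
  qed
  have g3: "(fact (i+2) :: real) = ((real i+2)*(real i+1))*fact i"
  proof -
    have "i+2 = Suc (Suc i)" by simp
    then show ?thesis by (simp only: fact_Suc) (simp add: algebra_simps)
  qed
  have p: "(fact k :: real) \<noteq> 0" "(fact i :: real) \<noteq> 0" "real i + 1 \<noteq> 0" "real i + 2 \<noteq> 0" by auto
  have B': "aa (n+2) k = ((real n+1)*(real n+2)*4*(2*real i+1)*(2*real i+3)/((real i+1)^2*(real i+2)^2)) * aa n k"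
    unfolding B A g1 g2 g3 by (rule algZ) (use p in auto)
  have d: "real n - real k = real i" using n by simp
  show ?thesis unfolding B' d using p by (simp add: field_simps)
qed


definition pA :: "real \<Rightarrow> real \<Rightarrow> real" where
  "pA n k = -10*k^2+30*k^3-22*k^4+4*k^5 + n*(-33*k^2+52*k^3-16*k^4) + n^2*(-30*k^2+20*k^3) - 8*n^3*k^2"

definition qB :: "real \<Rightarrow> real \<Rightarrow> real" where
  "qB n k = 17 - 52*k + 23*k^2 + 44*k^3 - 40*k^4 + 8*k^5
     + n*(68 - 126*k - 14*k^2 + 122*k^3 - 54*k^4 + 4*k^5)
     + n^2*(89 - 92*k - 73*k^2 + 92*k^3 - 16*k^4)
     + n^3*(46 - 20*k - 46*k^2 + 20*k^3) + n^4*(8 - 8*k^2)"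

lemma coreA:
  fixes n k j A1 A2 A3 N1 N2 K1 :: real
  assumes j: "j = n - k" and d: "A1 = 2*j-1" "A2 = 2*j+1" "A3 = 2*j+3" "N1 = n+1" "N2 = n+2" "K1 = k+1"
   and nz: "A1 \<noteq> 0" "A2 \<noteq> 0" "A3 \<noteq> 0" "N1 \<noteq> 0" "N2 \<noteq> 0" "K1 \<noteq> 0"
  shows "-16*N1^2*N2*((j+1)^2*(j+2)^2/(4*N1*N2*A2*A3)) + N2^3
     = pA n (k+1) * (-1*(j+2)^2*(2*k+1)/(K1^2*A3)) / (A1*A2) - pA n k / (A2*A3)"
proof -
  define D where "D = K1^2*A1*A2*A3"
  have Dnz: "D \<noteq> 0" using nz unfolding D_def by simp
  have L: "(-16*N1^2*N2*((j+1)^2*(j+2)^2/(4*N1*N2*A2*A3)) + N2^3) * D = (-4*N1*(j+1)^2*(j+2)^2 + N2^3*A2*A3) * (K1^2*A1)"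
    using nz unfolding D_def by (simp add: field_simps power2_eq_square power3_eq_cube)
  have R: "(pA n (k+1) * (-1*(j+2)^2*(2*k+1)/(K1^2*A3)) / (A1*A2) - pA n k / (A2*A3)) * D = (pA n (k+1) * (-1*(j+2)^2*(2*k+1)) - pA n k * K1^2 * A1)"
    using nz unfolding D_def by (simp add: field_simps power2_eq_square power3_eq_cube)
  have n: "n = k + j" using j by simp
  have P: "(-4*N1*(j+1)^2*(j+2)^2 + N2^3*A2*A3) * (K1^2*A1)
     = (pA n (k+1) * (-1*(j+2)^2*(2*k+1)) - pA n k * K1^2 * A1)"
    unfolding d n pA_def by (simp add: algebra_simps eval_nat_numeral)
  show ?thesis using L R P Dnz by (metis mult_right_cancel)
qed


lemma coreB:
  fixes n k j A1 A2 A3 N1 N2 N3 K1 K2 :: real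
  assumes j: "j = n - k" and d: "A1 = 2*j-1" "A2 = 2*j+1" "A3 = 2*j+3" "N1 = n+1" "N2 = n+2" "N3 = n+3" "K1 = k+1" "K2 = k+2"
   and nz: "A1 \<noteq> 0" "A2 \<noteq> 0" "A3 \<noteq> 0" "N1 \<noteq> 0" "N2 \<noteq> 0" "K1 \<noteq> 0" "K2 \<noteq> 0"
  shows "(-16*N1^2*N2^2*((j+1)^2*(j+2)^2/(4*N1*N2*A2*A3)) + N1^2*N3^2) * (k/K1)
     = qB n (k+1) * ((-1*(j+2)^2*(2*k+1)/(K1^2*A3)) * (K1/K2)) / (A1*A2) - qB n k * (k/K1) / (A2*A3)"
proof -
  define D where "D = K1^2*K2*A1*A2*A3"
  have Dnz: "D \<noteq> 0" using nz unfolding D_def by simp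
  have L: "((-16*N1^2*N2^2*((j+1)^2*(j+2)^2/(4*N1*N2*A2*A3)) + N1^2*N3^2) * (k/K1)) * D = (-4*N1*N2*(j+1)^2*(j+2)^2 + N1^2*N3^2*A2*A3) * (k*K1*K2*A1)"
    using nz unfolding D_def by (simp add: field_simps power2_eq_square power3_eq_cube)
  have R: "(qB n (k+1) * ((-1*(j+2)^2*(2*k+1)/(K1^2*A3)) * (K1/K2)) / (A1*A2) - qB n k * (k/K1) / (A2*A3)) * D = qB n (k+1) * (-1*(j+2)^2*(2*k+1)) * K1 - qB n k * k * K1 * K2 * A1"
    using nz unfolding D_def by (simp add: field_simps power2_eq_square power3_eq_cube)
  have n: "n = k + j" using j by simp
  have P: "(-4*N1*N2*(j+1)^2*(j+2)^2 + N1^2*N3^2*A2*A3) * (k*K1*K2*A1) = qB n (k+1) * (-1*(j+2)^2*(2*k+1)) * K1 - qB n k * k * K1 * K2 * A1"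
    unfolding d n qB_def by (simp add: algebra_simps eval_nat_numeral)
  show ?thesis using L R P Dnz by (metis mult_right_cancel)
qed


lemma odd_nz: "odd c \<Longrightarrow> 2*(real n - real k) + real_of_int c \<noteq> 0"
proof
  assume c: "odd c" and h: "2*(real n - real k) + real_of_int c = 0"
  have "real_of_int (2*(int n - int k) + c) = 0" using h by simp
  then have "2*(int n - int k) + c = 0" by (simp only: of_int_eq_0_iff)
  then show False using c by presburger
qed

lemma odd_nz1: "2*(real n - real k) + 1 \<noteq> 0" using odd_nz[of 1 n k] by simp
lemma odd_nz3: "2*(real n - real k) + 3 \<noteq> 0" using odd_nz[of 3 n k] by simp
lemma odd_nzm: "2*(real n - real k) - 1 \<noteq> 0" using odd_nz[of "-1" n k] by simp

definition GA :: "nat \<Rightarrow> nat \<Rightarrow> real" where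
  "GA n k = pA (real n) (real k) * aa (n+2) k / ((2*(real n - real k)+1)*(2*(real n - real k)+3))"

lemma stepA: "-16*(real n+1)^2*(real n+2)*aa n k + (real n+2)^3*aa (n+2) k = GA n (Suc k) - GA n k"
proof (cases "k \<le> n+2")
  case False
  then show ?thesis by (simp add: GA_def aa_zero)
next
  case True
  define j where "j = real n - real k"
  define X where "X = aa (n+2) k"
  have nz: "2*j-1 \<noteq> 0" "2*j+1 \<noteq> 0" "2*j+3 \<noteq> 0" "real n+1 \<noteq> 0" "real n+2 \<noteq> 0" "real k+1 \<noteq> 0"
    unfolding j_def using odd_nz1 odd_nz3 odd_nzm by auto
  define Dx where "Dx = 4*(real n+1)*(real n+2)*(2*j+1)*(2*j+3)"
  have Dnz: "Dx \<noteq> 0" using nz unfolding Dx_def by simp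
  have RZ: "aa n k * Dx = ((j+1)^2*(j+2)^2) * X"
    using relZ[OF True] unfolding X_def Dx_def j_def by (simp add: algebra_simps)
  have Z: "aa n k = X * ((j+1)^2*(j+2)^2/Dx)"
  proof -
    have "aa n k = ((j+1)^2*(j+2)^2) * X / Dx" using RZ Dnz by (simp add: eq_divide_eq)
    then show ?thesis by simp
  qed
  have Y0: "aa (n+2) (Suc k) * ((real k+1)^2 * (2*j+3)) = - ((j+2)^2 * (2*real k + 1) * X)"
  proof -
    have e: "2*(real (n+2) - real k) - 1 = 2*j+3" "real (n+2) - real k = j+2" unfolding j_def by simp_all
    show ?thesis using relY[of k "n+2"] True unfolding X_def e by (simp add: add.commute)
  qed
  have Y: "aa (n+2) (Suc k) = X * (-1*(j+2)^2*(2*real k+1)/((real k+1)^2*(2*j+3)))"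
  proof -
    have "(real k+1)^2 * (2*j+3) \<noteq> 0" using nz by simp
    then have "aa (n+2) (Suc k) = - ((j+2)^2 * (2*real k + 1) * X) / ((real k+1)^2 * (2*j+3))"
      using Y0 nz by (simp add: field_simps)
    then show ?thesis by simp
  qed
  have G1: "GA n (Suc k) = pA (real n) (real k+1) * aa (n+2) (Suc k) / ((2*j-1)*(2*j+1))"
    unfolding GA_def j_def by (simp add: algebra_simps)
  have G0: "GA n k = pA (real n) (real k) * X / ((2*j+1)*(2*j+3))"
    unfolding GA_def j_def X_def by simp
  have C: "-16*(real n+1)^2*(real n+2)*((j+1)^2*(j+2)^2/(4*(real n+1)*(real n+2)*(2*j+1)*(2*j+3))) + (real n+2)^3
     = pA (real n) (real k+1) * (-1*(j+2)^2*(2*real k+1)/((real k+1)^2*(2*j+3))) / ((2*j-1)*(2*j+1)) - pA (real n) (real k) / ((2*j+1)*(2*j+3))"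
    by (rule coreA) (use nz j_def in auto)
  have "-16*(real n+1)^2*(real n+2)*aa n k + (real n+2)^3*aa (n+2) k = X * (-16*(real n+1)^2*(real n+2)*((j+1)^2*(j+2)^2/Dx) + (real n+2)^3)"
    unfolding Z X_def by (simp add: algebra_simps)
  also have "\<dots> = X * (pA (real n) (real k+1) * (-1*(j+2)^2*(2*real k+1)/((real k+1)^2*(2*j+3))) / ((2*j-1)*(2*j+1)) - pA (real n) (real k) / ((2*j+1)*(2*j+3)))"
    unfolding Dx_def C ..
  also have "\<dots> = GA n (Suc k) - GA n k"
    unfolding G1 G0 Y by (simp add: algebra_simps)
  finally show ?thesis .
qed


definition bb :: "nat \<Rightarrow> nat \<Rightarrow> real" where
  "bb n k = aa n k * (real k / (real k + 1))"

definition GB :: "nat \<Rightarrow> nat \<Rightarrow> real" where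
  "GB n k = qB (real n) (real k) * bb (n+2) k / ((2*(real n - real k)+1)*(2*(real n - real k)+3))"

lemma linB: fixes X q1 q0 r f a e b :: real
  shows "X * (q1 * (r * f) / a - q0 * e / b) = q1 * ((X * r) * f) / a - q0 * (X * e) / b"
  by (simp add: algebra_simps)

lemma stepB: "-16*(real n+1)^2*(real n+2)^2*bb n k + (real n+1)^2*(real n+3)^2*bb (n+2) k = GB n (Suc k) - GB n k"
proof (cases "k \<le> n+2")
  case False
  then show ?thesis by (simp add: GB_def bb_def aa_zero)
next
  case True
  define j where "j = real n - real k"
  define X where "X = aa (n+2) k"
  have nz: "2*j-1 \<noteq> 0" "2*j+1 \<noteq> 0" "2*j+3 \<noteq> 0" "real n+1 \<noteq> 0" "real n+2 \<noteq> 0" "real k+1 \<noteq> 0" "real k+2 \<noteq> 0" "real n + 3 \<noteq> 0"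
    unfolding j_def using odd_nz1 odd_nz3 odd_nzm by auto
  define Dx where "Dx = 4*(real n+1)*(real n+2)*(2*j+1)*(2*j+3)"
  have Dnz: "Dx \<noteq> 0" using nz unfolding Dx_def by simp
  have RZ: "aa n k * Dx = ((j+1)^2*(j+2)^2) * X"
    using relZ[OF True] unfolding X_def Dx_def j_def by (simp add: algebra_simps)
  have Z: "aa n k = X * ((j+1)^2*(j+2)^2/Dx)"
  proof -
    have "aa n k = ((j+1)^2*(j+2)^2) * X / Dx" using RZ Dnz by (simp add: eq_divide_eq)
    then show ?thesis by simp
  qed
  have Y0: "aa (n+2) (Suc k) * ((real k+1)^2 * (2*j+3)) = - ((j+2)^2 * (2*real k + 1) * X)"
  proof -
    have e: "2*(real (n+2) - real k) - 1 = 2*j+3" "real (n+2) - real k = j+2" unfolding j_def by simp_all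
    show ?thesis using relY[of k "n+2"] True unfolding X_def e by (simp add: add.commute)
  qed
  have Y: "aa (n+2) (Suc k) = X * (-1*(j+2)^2*(2*real k+1)/((real k+1)^2*(2*j+3)))"
  proof -
    have "(real k+1)^2 * (2*j+3) \<noteq> 0" using nz by simp
    then have "aa (n+2) (Suc k) = - ((j+2)^2 * (2*real k + 1) * X) / ((real k+1)^2 * (2*j+3))"
      using Y0 nz by (simp add: field_simps)
    then show ?thesis by simp
  qed
  have G1: "GB n (Suc k) = qB (real n) (real k+1) * (aa (n+2) (Suc k) * ((real k+1)/(real k+2))) / ((2*j-1)*(2*j+1))"
    unfolding GB_def bb_def j_def by (simp add: algebra_simps)
  have G0: "GB n k = qB (real n) (real k) * (X * (real k/(real k+1))) / ((2*j+1)*(2*j+3))"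
    unfolding GB_def bb_def j_def X_def by simp
  have C: "(-16*(real n+1)^2*(real n+2)^2*((j+1)^2*(j+2)^2/(4*(real n+1)*(real n+2)*(2*j+1)*(2*j+3))) + (real n+1)^2*(real n+3)^2) * (real k/(real k+1))
     = qB (real n) (real k+1) * ((-1*(j+2)^2*(2*real k+1)/((real k+1)^2*(2*j+3))) * ((real k+1)/(real k+2))) / ((2*j-1)*(2*j+1)) - qB (real n) (real k) * (real k/(real k+1)) / ((2*j+1)*(2*j+3))"
    by (rule coreB) (use nz j_def in auto)
  have "-16*(real n+1)^2*(real n+2)^2*bb n k + (real n+1)^2*(real n+3)^2*bb (n+2) k = X * ((-16*(real n+1)^2*(real n+2)^2*((j+1)^2*(j+2)^2/Dx) + (real n+1)^2*(real n+3)^2) * (real k/(real k+1)))"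
    unfolding bb_def Z X_def by (simp add: algebra_simps)
  also have "\<dots> = X * (qB (real n) (real k+1) * ((-1*(j+2)^2*(2*real k+1)/((real k+1)^2*(2*j+3))) * ((real k+1)/(real k+2))) / ((2*j-1)*(2*j+1)) - qB (real n) (real k) * (real k/(real k+1)) / ((2*j+1)*(2*j+3)))"
    unfolding Dx_def C ..
  also have "\<dots> = GB n (Suc k) - GB n k"
    unfolding G1 G0 Y by (rule linB)
  finally show ?thesis .
qed


lemma aa_ext: "(\<Sum>k=0..n+m. aa n k) = (\<Sum>k=0..n. aa n k)"
  by (induction m) (auto simp: aa_zero)

lemma bb_ext: "(\<Sum>k=0..n+m. bb n k) = (\<Sum>k=0..n. bb n k)"
  by (induction m) (auto simp: aa_zero bb_def)

definition SA :: "nat \<Rightarrow> real" where "SA n = (\<Sum>k=0..n. aa n k)"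
definition SB :: "nat \<Rightarrow> real" where "SB n = (\<Sum>k=0..n. bb n k)"

lemma lin2: fixes a b x d y :: real shows "(-16)*a*b*x + d*y = 0 \<Longrightarrow> d*y = 16*a*b*x"
proof -
  assume h: "(-16)*a*b*x + d*y = 0"
  have "(-16)*a*b*x = -(16*a*b*x)" by simp
  then show ?thesis using h by linarith
qed

lemma sum_lin: fixes r s :: real shows "(\<Sum>k\<in>A. r*f k + s*g k) = r*(\<Sum>k\<in>A. f k) + s*(\<Sum>k\<in>A. g k)"
  by (simp only: sum.distrib sum_distrib_left)

lemma recA: "(real n+2)^3 * SA (n+2) = 16*(real n+1)^2*(real n+2) * SA n"
proof -
  have "(\<Sum>k=0..n+2. -16*(real n+1)^2*(real n+2)*aa n k + (real n+2)^3*aa (n+2) k) = (\<Sum>k=0..n+2. GA n (Suc k) - GA n k)"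
    using stepA by simp
  also have "\<dots> = GA n (Suc (n+2)) - GA n 0" by (rule sum_Suc_diff) simp
  also have "\<dots> = 0" by (simp add: GA_def aa_zero pA_def)
  finally have "(\<Sum>k=0..n+2. -16*(real n+1)^2*(real n+2)*aa n k + (real n+2)^3*aa (n+2) k) = 0" .
  then have "-16*(real n+1)^2*(real n+2)*(\<Sum>k=0..n+2. aa n k) + (real n+2)^3*(\<Sum>k=0..n+2. aa (n+2) k) = 0"
    by (simp only: sum_lin)
  moreover have "(\<Sum>k=0..n+2. aa n k) = SA n" unfolding SA_def by (rule aa_ext)
  moreover have "(\<Sum>k=0..n+2. aa (n+2) k) = SA (n+2)" unfolding SA_def ..
  ultimately show ?thesis by (metis lin2)
qed

lemma recB: "(real n+1)^2*(real n+3)^2 * SB (n+2) = 16*(real n+1)^2*(real n+2)^2 * SB n"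
proof -
  have "(\<Sum>k=0..n+2. -16*(real n+1)^2*(real n+2)^2*bb n k + (real n+1)^2*(real n+3)^2*bb (n+2) k) = (\<Sum>k=0..n+2. GB n (Suc k) - GB n k)"
    using stepB by simp
  also have "\<dots> = GB n (Suc (n+2)) - GB n 0" by (rule sum_Suc_diff) simp
  also have "\<dots> = 0" by (simp add: GB_def bb_def aa_zero)
  finally have "(\<Sum>k=0..n+2. -16*(real n+1)^2*(real n+2)^2*bb n k + (real n+1)^2*(real n+3)^2*bb (n+2) k) = 0" .
  then have "-16*(real n+1)^2*(real n+2)^2*(\<Sum>k=0..n+2. bb n k) + (real n+1)^2*(real n+3)^2*(\<Sum>k=0..n+2. bb (n+2) k) = 0"
    by (simp only: sum_lin)
  moreover have "(\<Sum>k=0..n+2. bb n k) = SB n" unfolding SB_def by (rule bb_ext)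
  moreover have "(\<Sum>k=0..n+2. bb (n+2) k) = SB (n+2)" unfolding SB_def ..
  ultimately show ?thesis by (metis lin2)
qed

lemma cbn1: "(m+1) * ((2*m+2) choose (m+1)) = 2*(2*m+1) * ((2*m) choose m)"
proof -
  define B0 where "B0 = (2*m) choose m"
  define B1 where "B1 = (2*m+1) choose m"
  define B2 where "B2 = (2*m+2) choose (m+1)"
  have h1: "(m+1) * B2 = (2*m+2) * B1"
    using binomial_absorption[of m "2*m+2"] unfolding B1_def B2_def by (simp del: binomial_Suc_Suc)
  have h2: "(m+1) * B1 = (2*m+1) * B0"
  proof -
    have "2*m+1 - m = m+1" by simp
    then show ?thesis using binomial_absorb_comp[of "2*m+1" m] unfolding B1_def B0_def by (simp del: binomial_Suc_Suc)
  qed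
  have "(m+1) * ((m+1) * B2) = (m+1) * (2*(2*m+1) * B0)"
  proof -
    have "(m+1) * ((m+1) * B2) = (m+1) * ((2*m+2) * B1)" using h1 by simp
    also have "\<dots> = (2*m+2) * ((m+1) * B1)" by (simp only: mult_ac)
    also have "\<dots> = (2*m+2) * ((2*m+1) * B0)" using h2 by simp
    also have "\<dots> = (m+1) * (2*(2*m+1) * B0)" by (simp add: algebra_simps)
    finally show ?thesis .
  qed
  then have "(m+1) * B2 = 2*(2*m+1) * B0" by (metis mult_left_cancel add_is_0 one_neq_zero)
  then show ?thesis unfolding B0_def B2_def .
qed

lemma cbn2: "(m+2) * ((2*m+3) choose (m+1)) = 2*(2*m+3) * ((2*m+1) choose m)"
proof -
  define B1 where "B1 = (2*m+1) choose m"
  define B2 where "B2 = (2*m+2) choose (m+1)"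
  define B3 where "B3 = (2*m+3) choose (m+1)"
  have h1: "(m+1) * B2 = (2*m+2) * B1"
    using binomial_absorption[of m "2*m+2"] unfolding B1_def B2_def by (simp del: binomial_Suc_Suc)
  have h1': "B2 = 2 * B1"
  proof -
    have "(m+1) * B2 = (m+1) * (2 * B1)" using h1 by (simp add: algebra_simps)
    then show ?thesis by (metis mult_left_cancel add_is_0 one_neq_zero)
  qed
  have h2: "(m+2) * B3 = (2*m+3) * B2"
  proof -
    have "2*m+3 - (m+1) = m+2" by simp
    then show ?thesis using binomial_absorb_comp[of "2*m+3" "m+1"] unfolding B3_def B2_def by (simp del: binomial_Suc_Suc)
  qed
  have "(m+2) * B3 = 2*(2*m+3) * B1" unfolding h2 h1' by simp
  then show ?thesis unfolding B3_def B1_def .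
qed

lemma cb1: "real ((2*(m+1)) choose (m+1)) = 2*(2*real m+1) * real ((2*m) choose m) / (real m+1)"
proof -
  have H: "real (m+1) * real ((2*m+2) choose (m+1)) = 2*(2*real m+1) * real ((2*m) choose m)"
    using arg_cong[OF cbn1[of m], of real] by (simp only: of_nat_mult) simp
  have nz: "real (m+1) \<noteq> 0" by simp
  have "real ((2*m+2) choose (m+1)) = 2*(2*real m+1) * real ((2*m) choose m) / real (m+1)"
    using H nz by (metis nonzero_mult_div_cancel_left)
  moreover have "2*(m+1) = 2*m+2" by simp
  ultimately show ?thesis by simp
qed

lemma cb2: "real ((2*m+3) choose (m+1)) = 2*(2*real m+3) * real ((2*m+1) choose m) / (real m+2)"
proof -
  have H: "real (m+2) * real ((2*m+3) choose (m+1)) = 2*(2*real m+3) * real ((2*m+1) choose m)"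
    using arg_cong[OF cbn2[of m], of real] by (simp only: of_nat_mult) simp
  have nz: "real (m+2) \<noteq> 0" by simp
  have "real ((2*m+3) choose (m+1)) = 2*(2*real m+3) * real ((2*m+1) choose m) / real (m+2)"
    using H nz by (metis nonzero_mult_div_cancel_left)
  then show ?thesis by simp
qed

lemma gA: fixes a x b y :: real assumes "a \<noteq> 0" "a^3*x = 16*b^2*a*y" shows "x = 16*b^2*y/a^2"
  using assms by (simp add: field_simps power2_eq_square power3_eq_cube)

lemma gB: fixes a c x b y :: real assumes "a \<noteq> 0" "c \<noteq> 0" "a^2*c^2*x = 16*a^2*b^2*y" shows "x = 16*b^2*y/c^2"
  using assms by (simp add: field_simps power2_eq_square)

lemma gz: fixes z b B :: real assumes "z \<noteq> 0" shows "16*b^2*B^2/(2*z)^2 = (2*b*B/z)^2"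
  using assms by (simp add: power_mult_distrib power_divide)

lemma gA2: fixes M B :: real assumes "M \<ge> 0" shows "16*(2*M+1)^2*B^2/(2*M+2)^2 = (2*(2*M+1)*B/(M+1))^2"
proof -
  have "M + 1 \<noteq> 0" using assms by simp
  moreover have "2*M+2 = 2*(M+1)" by simp
  ultimately show ?thesis using gz[of "M+1" "2*M+1" B] by simp
qed

lemma gB2: fixes M B :: real assumes "M \<ge> 0" shows "16*(2*M+3)^2*((-1)*B^2)/(2*M+4)^2 = (-1)*(2*(2*M+3)*B/(M+2))^2"
proof -
  have "M + 2 \<noteq> 0" using assms by simp
  moreover have "2*M+4 = 2*(M+2)" by simp
  ultimately show ?thesis using gz[of "M+2" "2*M+3" B] by simp
qed

lemma SA_closed: "SA (2*m) = real ((2*m) choose m)^2 \<and> SA (2*m+1) = 0"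
proof (induction m)
  case 0
  show ?case by (simp add: SA_def aa_def)
next
  case (Suc m)
  have e: "2 * Suc m = 2*m+2" "2*Suc m + 1 = 2*m+3" "2*m+1+2 = 2*m+3" by simp_all
  have r1: "(2*real m+2)^3 * SA (2*m+2) = 16*(2*real m+1)^2*(2*real m+2) * SA (2*m)"
    using recA[of "2*m"] by simp
  have r2: "(2*real m+3)^3 * SA (2*m+3) = 16*(2*real m+2)^2*(2*real m+3) * SA (2*m+1)"
    using recA[of "2*m+1"] unfolding e by (simp add: add_ac)
  have A1: "SA (2*m+2) = 16*(2*real m+1)^2*SA (2*m)/(2*real m+2)^2"
    by (rule gA) (use r1 in auto)
  have A2: "SA (2*m+3) = 0" using r2 Suc.IH by simp
  have c: "real ((2*(m+1)) choose (m+1)) = 2*(2*real m+1) * real ((2*m) choose m) / (real m+1)" by (rule cb1)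
  have X: "SA (2*m+2) = real ((2*(m+1)) choose (m+1))^2"
    unfolding A1 c using Suc.IH gA2[of "real m" "real ((2*m) choose m)"] by simp
  have ee: "2*(m+1) = 2*m+2" "m+1 = Suc m" by simp_all
  have X': "SA (2*m+2) = real ((2*m+2) choose Suc m)^2" using X by (simp only: ee(1)) (simp only: ee(2))
  have F1: "SA (2*Suc m) = real ((2*Suc m) choose Suc m)^2" using X' by (simp only: e(1))
  have F2: "SA (2*Suc m+1) = 0" using A2 by (simp only: e(2))
  show ?case using F1 F2 by blast
qed

lemma SB_closed: "SB (2*m) = 0 \<and> SB (2*m+1) = (-1) * real ((2*m+1) choose m)^2"
proof (induction m)
  case 0
  show ?case by (simp add: SB_def bb_def aa_def)
next
  case (Suc m)
  have e: "2 * Suc m = 2*m+2" "2*Suc m + 1 = 2*m+3" "2*m+1+2 = 2*m+3" by simp_all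
  have r1: "(2*real m+1)^2*(2*real m+3)^2 * SB (2*m+2) = 16*(2*real m+1)^2*(2*real m+2)^2 * SB (2*m)"
    using recB[of "2*m"] by simp
  have r2: "(2*real m+2)^2*(2*real m+4)^2 * SB (2*m+3) = 16*(2*real m+2)^2*(2*real m+3)^2 * SB (2*m+1)"
    using recB[of "2*m+1"] unfolding e by (simp add: add_ac)
  have B1: "SB (2*m+2) = 0" using r1 Suc.IH by simp
  have B2: "SB (2*m+3) = 16*(2*real m+3)^2*SB (2*m+1)/(2*real m+4)^2"
    by (rule gB[of "2*real m+2" "2*real m+4"]) (use r2 in auto)
  have c: "real ((2*m+3) choose (m+1)) = 2*(2*real m+3) * real ((2*m+1) choose m) / (real m+2)" by (rule cb2)
  have "SB (2*m+3) = (-1) * real ((2*m+3) choose (m+1))^2"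
    unfolding B2 c using Suc.IH gB2[of "real m" "real ((2*m+1) choose m)"] by simp
  then have Y: "SB (2*m+3) = (-1) * real ((2*m+3) choose Suc m)^2" by (simp only: Suc_eq_plus1)
  have F2: "SB (2*Suc m+1) = (-1) * real ((2*Suc m+1) choose Suc m)^2" using Y by (simp only: e(2))
  have F1: "SB (2*Suc m) = 0" using B1 by (simp only: e(1))
  show ?case using F1 F2 by blast
qed


lemma cat_nat: "(k+1) * ((2*k) choose (k+1)) = k * ((2*k) choose k)"
proof -
  have h1: "Suc k * ((2*k) choose Suc k) = (2*k) * ((2*k - 1) choose k)" by (rule binomial_absorption)
  have h2: "(2*k - k) * ((2*k) choose k) = (2*k) * ((2*k - 1) choose k)" by (rule binomial_absorb_comp)
  have a: "(k+1) * ((2*k) choose (k+1)) = (2*k) * ((2*k - 1) choose k)" using h1 by (simp only: Suc_eq_plus1)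
  have e: "2*k - k = k" by simp
  have b: "k * ((2*k) choose k) = (2*k) * ((2*k - 1) choose k)" using h2 by (simp only: e)
  show ?thesis by (simp only: a b)
qed

lemma cat_dvd: "(k+1) dvd ((2*k) choose k)"
proof -
  have le: "(2*k) choose (k+1) \<le> (2*k) choose k"
  proof -
    have "(k+1) * ((2*k) choose (k+1)) \<le> (k+1) * ((2*k) choose k)" unfolding cat_nat by simp
    then show ?thesis by (metis mult_le_cancel1 zero_less_Suc Suc_eq_plus1)
  qed
  have "(2*k) choose k = (k+1) * ((2*k) choose k) - k * ((2*k) choose k)" by (simp add: algebra_simps)
  also have "\<dots> = (k+1) * ((2*k) choose k) - (k+1) * ((2*k) choose (k+1))" unfolding cat_nat ..
  also have "\<dots> = (k+1) * (((2*k) choose k) - ((2*k) choose (k+1)))" by (simp add: diff_mult_distrib2)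
  finally show ?thesis by (metis dvd_triv_left)
qed

lemma cat_real: "real (catalan k) = real ((2*k) choose k) / (real k + 1)"
  unfolding catalan_def using real_of_nat_div[OF cat_dvd[of k]] by simp

lemma summand_real: "real_of_int ((-1::int)^k * int (n choose k) * int (catalan k) * int ((2*n - 2*k) choose (n - k))) = aa n k - bb n k"
proof -
  have "real_of_int ((-1::int)^k * int (n choose k) * int (catalan k) * int ((2*n - 2*k) choose (n - k)))
     = (-1)^k * real (n choose k) * real (catalan k) * real ((2*n - 2*k) choose (n - k))" by simp
  also have "\<dots> = aa n k / (real k + 1)" unfolding cat_real aa_def by simp
  also have "\<dots> = aa n k - bb n k" unfolding bb_def by (simp add: field_simps)
  finally show ?thesis .
qed

theorem mainTheorem1:
  fixes n :: nat
  shows "(\<Sum>k=0..n. (-1::int)^k * int (n choose k) * int (catalan k) * int ((2*n - 2*k) choose (n - k)))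
         = int (n choose (n div 2))^2"
proof -
  have L: "real_of_int (\<Sum>k=0..n. (-1::int)^k * int (n choose k) * int (catalan k) * int ((2*n - 2*k) choose (n - k))) = SA n - SB n"
    unfolding of_int_sum summand_real SA_def SB_def by (simp add: sum_subtractf)
  have R: "SA n - SB n = real (n choose (n div 2))^2"
  proof (cases "even n")
    case True
    then obtain m where m: "n = 2*m" by (metis evenE)
    then show ?thesis using SA_closed[of m] SB_closed[of m] by simp
  next
    case False
    then obtain m where m: "n = 2*m+1" by (metis oddE)
    then show ?thesis using SA_closed[of m] SB_closed[of m] by simp
  qed
  have "real_of_int (\<Sum>k=0..n. (-1::int)^k * int (n choose k) * int (catalan k) * int ((2*n - 2*k) choose (n - k)))
     = real_of_int (int (n choose (n div 2))^2)" using L R by simp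
  then show ?thesis by (simp only: of_int_eq_iff)
qed

end
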